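(* Assume $\mathrm{rank}\,R=q$ and $\mathrm{Ker}\,(D_{\xi_0}\varphi)\cap\mathrm{Ker}\,R=\{0\}$. Then: (i) $\mathcal{U}^\perp=\{\sigma\in\mathbb{R}^m:(D_{\xi_0}\varphi)^T\sigma\in\mathrm{Im}\,R^T\}$; moreover $\mathcal{V}=K^{-1}\mathcal{U}^\perp$, so $\dim\mathcal{U}^\perp=\dim\mathcal{V}$, and $\mathcal{V}=\mathcal{U}^{\perp_K}$, the orthogonal complement of $\mathcal U$ with respect to the inner product $(x,y)\mapsto x^TKy$; (ii) for every $\sigma\in\mathbb{R}^m$ and every $f\in\mathbb{R}^{nd}$, $(D_{\xi_0}\varphi)^T(-\sigma+Hf)\in\mathrm{Im}\,R^T$ if and only if $-\sigma+Hf\in\mathcal{U}^\perp$; (iii) $\dim\mathcal{U}=\dim\mathrm{Ker}\,R=nd-q$ and $\dim\mathcal{V}=m-nd+q$.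
   Context: $n,m,d,q$ are positive integers. $Q$ is an $n\times m$ matrix with entries in $\{0,1,-1\}$, each column having exactly one $1$ and one $-1$, other entries $0$. $\xi_0\in\mathbb{R}^{nd}$ lists node coordinates ($\xi^0_{d(j-1)+k}$ is the $k$-th coordinate of node $j$), with the endpoints of each spring distinct. $\varphi:\mathbb{R}^{nd}\to\mathbb{R}^m$, $\varphi_i(\xi)=\sqrt{\sum_{k=1}^d(\sum_{j}Q_{ji}\xi_{d(j-1)+k})^2}$, and $D_{\xi_0}\varphi$ is its $m\times nd$ Jacobian at $\xi_0$: $(D_{\xi_0}\varphi)_{i,d(j-1)+k}=\mathcal{D}_{ik}Q_{ji}$ with $\mathcal{D}_{ik}=\frac{1}{\varphi_i(\xi_0)}\sum_{\bar j}Q_{\bar ji}\xi^0_{d(\bar j-1)+k}$. $R$ is a $q\times nd$ matrix; $K=\mathrm{diag}(k_1,\dots,k_m)$ with all $k_i>0$. $H$ is the $m\times nd$ matrix formed by the first $m$ rows of the Moore–Penrose pseudoinverse of the $nd\times(m+q)$ matrix $\begin{pmatrix}(D_{\xi_0}\varphi)^T & R^T\end{pmatrix}$. $\mathcal{U}=\{(D_{\xi_0}\varphi)\zeta:\zeta\in\mathbb{R}^{nd},\,R\zeta=0\}\subset\mathbb{R}^m$, $\mathcal{V}=\{K^{-1}\sigma:(D_{\xi_0}\varphi)^T\sigma\in\mathrm{Im}\,R^T\}\subset\mathbb{R}^m$, and $\mathcal{U}^\perp$ is the orthogonal complement in the standard inner product. *)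

theory Defs
  imports "HOL-Analysis.Analysis"
begin

text \<open>Index conventions: nodes are a finite type 'n (n = CARD('n)), coordinates a finite
type 'd (d = CARD('d)), springs a finite type 'm, constraints a finite type 'q.
The space R^(nd) is real^('n \<times> 'd); the coordinate (j,k) corresponds to index d(j-1)+k.\<close>

definition incidence_matrix :: "real^'m^'n \<Rightarrow> bool" where
  "incidence_matrix Q \<longleftrightarrow>
     (\<forall>j i. Q$j$i \<in> {0, 1, -1}) \<and>
     (\<forall>i. (\<exists>!j. Q$j$i = 1) \<and> (\<exists>!j. Q$j$i = -1))"

text \<open>Spring lengths phi_i(xi).\<close>
definition spring_len :: "real^'m^'n::finite \<Rightarrow> real^('n \<times> 'd::finite) \<Rightarrow> 'm \<Rightarrow> real" where
  "spring_len Q \<xi> i = sqrt (\<Sum>k\<in>UNIV. (\<Sum>j\<in>UNIV. Q$j$i * \<xi>$(j,k))\<^sup>2)"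

text \<open>The matrix \<D>_{ik}.\<close>
definition calD :: "real^'m^'n::finite \<Rightarrow> real^('n \<times> 'd::finite) \<Rightarrow> 'm \<Rightarrow> 'd \<Rightarrow> real" where
  "calD Q \<xi>0 i k = (1 / spring_len Q \<xi>0 i) * (\<Sum>j\<in>UNIV. Q$j$i * \<xi>0$(j,k))"

text \<open>Jacobian D_{xi0} phi, an m \<times> nd matrix.\<close>
definition Dphi :: "real^'m^'n::finite \<Rightarrow> real^('n \<times> 'd::finite) \<Rightarrow> real^('n \<times> 'd)^'m" where
  "Dphi Q \<xi>0 = (\<chi> i. \<chi> p. calD Q \<xi>0 i (snd p) * Q$(fst p)$i)"

text \<open>Moore--Penrose pseudoinverse: the unique matrix satisfying the four Penrose equations.\<close>
definition is_pinv :: "real^'c^'r \<Rightarrow> real^'r::finite^'c::finite \<Rightarrow> bool" where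
  "is_pinv A X \<longleftrightarrow> A ** X ** A = A \<and> X ** A ** X = X \<and>
     transpose (A ** X) = A ** X \<and> transpose (X ** A) = X ** A"

definition pinv :: "real^'c::finite^'r::finite \<Rightarrow> real^'r^'c" where
  "pinv A = (THE X. is_pinv A X)"

text \<open>The nd \<times> (m+q) block matrix ( D^T  R^T ); columns indexed by 'm + 'q.\<close>
definition block_DR :: "real^'c^'m::finite \<Rightarrow> real^'c^'q::finite \<Rightarrow> real^('m + 'q)^'c" where
  "block_DR D R = (\<chi> r c. case c of Inl i \<Rightarrow> D$i$r | Inr l \<Rightarrow> R$l$r)"

text \<open>H: the first m rows of the pseudoinverse of the block matrix.\<close>
definition Hmat :: "real^'c::finite^'m::finite \<Rightarrow> real^'c^'q::finite \<Rightarrow> real^'c^'m" where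
  "Hmat D R = (\<chi> i. pinv (block_DR D R) $ Inl i)"

definition diag_mat :: "('m \<Rightarrow> real) \<Rightarrow> real^'m^'m" where
  "diag_mat k = (\<chi> i j. if i = j then k i else 0)"

definition Uspace :: "real^'c^'m \<Rightarrow> real^'c^'q \<Rightarrow> (real^'m) set" where
  "Uspace D R = {D *v \<zeta> | \<zeta>. R *v \<zeta> = 0}"

definition Vspace :: "real^'c^'m \<Rightarrow> real^'c^'q \<Rightarrow> real^'m^'m \<Rightarrow> (real^'m) set" where
  "Vspace D R K = {matrix_inv K *v \<sigma> | \<sigma>. transpose D *v \<sigma> \<in> range (\<lambda>y. transpose R *v y)}"

text \<open>Orthogonal complement w.r.t. the inner product (x,y) \<mapsto> x^T K y.\<close>
definition K_orth_comp :: "real^'m^'m \<Rightarrow> (real^'m) set \<Rightarrow> (real^'m) set" where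
  "K_orth_comp K W = {x. \<forall>y\<in>W. x \<bullet> (K *v y) = 0}"

end

theory Submission
  imports Defs
begin

lemma ker_eq_orth:
  fixes R :: "real^'c::finite^'q::finite"
  shows "{\<zeta>. R *v \<zeta> = 0} = orthogonal_comp (range (\<lambda>y. transpose R *v y))"
proof -
  show ?thesis
    unfolding orthogonal_comp_def orthogonal_def
    apply (auto simp: dot_lmul_matrix)
    by (metis dot_lmul_matrix inner_eq_zero_iff)
qed

lemma subspace_rangeT:
  fixes R :: "real^'c::finite^'q::finite"
  shows "subspace (range (\<lambda>y. transpose R *v y))"
  by (rule linear_subspace_image[OF matrix_vector_mul_linear subspace_UNIV])

lemma Uperp_char:
  fixes D :: "real^'c::finite^'m::finite" and R :: "real^'c^'q::finite"
  shows "orthogonal_comp (Uspace D R) = {\<sigma>. transpose D *v \<sigma> \<in> range (\<lambda>y. transpose R *v y)}"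
proof -
  let ?T = "range (\<lambda>y. transpose R *v y)"
  have e: "(D *v z) \<bullet> s = z \<bullet> (transpose D *v s)" for z s
    by (metis dot_lmul_matrix vector_transpose_matrix inner_commute)
  have "\<sigma> \<in> orthogonal_comp (Uspace D R) \<longleftrightarrow> transpose D *v \<sigma> \<in> orthogonal_comp {\<zeta>. R *v \<zeta> = 0}" for \<sigma>
    unfolding orthogonal_comp_def orthogonal_def Uspace_def by (auto simp: e)
  moreover have "orthogonal_comp {\<zeta>. R *v \<zeta> = 0} = ?T"
    unfolding ker_eq_orth by (rule orthogonal_comp_self[OF subspace_rangeT])
  ultimately show ?thesis by auto
qed

lemma diag_mult: "diag_mat a ** diag_mat b = diag_mat (\<lambda>i. a i * b i)"
proof -
  have "(\<Sum>k\<in>UNIV. (if i = k then a i else 0) * (if k = j then b k else (0::real))) = (if i = j then a i * b i else 0)" for i j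
  proof -
    have "(\<Sum>k\<in>UNIV. (if i = k then a i else 0) * (if k = j then b k else (0::real))) = (\<Sum>k\<in>UNIV. if k = i then a i * (if k = j then b k else 0) else 0)"
      by (rule sum.cong) auto
    also have "\<dots> = a i * (if i = j then b i else 0)" by simp
    finally show ?thesis by simp
  qed
  then show ?thesis unfolding diag_mat_def matrix_matrix_mult_def by (simp add: vec_eq_iff)
qed

lemma diag_one: "diag_mat (\<lambda>i. 1) = mat 1"
  by (simp add: diag_mat_def mat_def vec_eq_iff)

lemma matrix_inv_eq:
  fixes A :: "real^'n::finite^'n" and B :: "real^'n^'n"
  assumes "A ** B = mat 1" "B ** A = mat 1"
  shows "matrix_inv A = B"
proof -
  have "A ** matrix_inv A = mat 1 \<and> matrix_inv A ** A = mat 1"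
    unfolding matrix_inv_def by (rule someI[of _ B]) (use assms in auto)
  then have "matrix_inv A = (B ** A) ** matrix_inv A" using assms by (simp add: matrix_mul_lid)
  also have "\<dots> = B" using \<open>_ \<and> _\<close> by (simp add: matrix_mul_assoc[symmetric] matrix_mul_rid)
  finally show ?thesis .
qed

theorem proposition7:
  fixes Q :: "real^'m::finite^'n::finite"
    and \<xi>0 :: "real^('n \<times> 'd::finite)"
    and R :: "real^('n \<times> 'd)^'q::finite"
    and k :: "'m \<Rightarrow> real"
  defines "D \<equiv> Dphi Q \<xi>0"
    and "K \<equiv> diag_mat k"
  assumes Q: "incidence_matrix Q"
    and distinct_ends: "\<And>i j j'. Q$j$i = 1 \<Longrightarrow> Q$j'$i = -1 \<Longrightarrow>
        (\<chi> c::'d. \<xi>0$(j,c)) \<noteq> (\<chi> c. \<xi>0$(j',c))"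
    and k_pos: "\<And>i. k i > 0"
    and rankR: "rank R = CARD('q)"
    and ker: "{\<zeta>. D *v \<zeta> = 0} \<inter> {\<zeta>. R *v \<zeta> = 0} = {0}"
  shows
    "(orthogonal_comp (Uspace D R) =
        {\<sigma>. transpose D *v \<sigma> \<in> range (\<lambda>y. transpose R *v y)}
      \<and> Vspace D R K = (\<lambda>x. matrix_inv K *v x) ` orthogonal_comp (Uspace D R)
      \<and> dim (orthogonal_comp (Uspace D R)) = dim (Vspace D R K)
      \<and> Vspace D R K = K_orth_comp K (Uspace D R))
     \<and> (\<forall>\<sigma> f. (transpose D *v (- \<sigma> + Hmat D R *v f) \<in> range (\<lambda>y. transpose R *v y))
                \<longleftrightarrow> (- \<sigma> + Hmat D R *v f \<in> orthogonal_comp (Uspace D R)))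
     \<and> (dim (Uspace D R) = dim {\<zeta>. R *v \<zeta> = 0}
      \<and> dim {\<zeta>. R *v \<zeta> = 0} = CARD('n) * CARD('d) - CARD('q)
      \<and> int (dim (Vspace D R K)) = int CARD('m) - int (CARD('n) * CARD('d)) + int CARD('q))"
proof -
  let ?T = "range (\<lambda>y. transpose R *v y)"
  let ?N = "{\<zeta>. R *v \<zeta> = 0}"
  let ?U = "Uspace D R"
  define Ki where "Ki = diag_mat (\<lambda>i. 1 / k i)"
  have KKi: "K ** Ki = mat 1" "Ki ** K = mat 1"
    unfolding K_def Ki_def diag_mult using k_pos
    by (simp_all add: diag_one[symmetric] less_imp_neq[symmetric])
  have MI: "matrix_inv K = Ki" by (rule matrix_inv_eq[OF KKi])
  have KiK: "Ki *v (K *v x) = x" "K *v (Ki *v x) = x" for x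
    by (simp_all add: matrix_vector_mul_assoc KKi)
  have Ksym: "transpose K = K" unfolding K_def diag_mat_def transpose_def
    by (simp add: vec_eq_iff)
  have UP: "orthogonal_comp ?U = {\<sigma>. transpose D *v \<sigma> \<in> ?T}" by (rule Uperp_char)
  have V1: "Vspace D R K = (\<lambda>x. matrix_inv K *v x) ` orthogonal_comp ?U"
    unfolding UP Vspace_def by auto
  have injKi: "inj ((*v) Ki)" by (metis KiK(2) injI)
  have V2: "dim (orthogonal_comp ?U) = dim (Vspace D R K)"
    unfolding V1 MI
    by (rule eucl.dim_image_eq[symmetric]) (auto simp: matrix_vector_mul_linear intro: inj_on_subset[OF injKi])
  have V3: "Vspace D R K = K_orth_comp K ?U"
  proof -
    have e: "x \<bullet> (K *v y) = (K *v x) \<bullet> y" for x y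
    proof -
      have "x v* K = K *v x" using vector_transpose_matrix[of x K] Ksym by simp
      then show ?thesis using dot_lmul_matrix[of x K y] by simp
    qed
    have e2: "x \<bullet> (K *v y) = y \<bullet> (K *v x)" for x y
      using e[of x y] inner_commute[of "K *v x" y] by simp
    have "x \<in> K_orth_comp K ?U \<longleftrightarrow> K *v x \<in> orthogonal_comp ?U" for x
      unfolding K_orth_comp_def orthogonal_comp_def orthogonal_def mem_Collect_eq
      by (simp only: e2)
    note iff = this
    show ?thesis unfolding V1 MI
    proof (rule set_eqI)
      fix x
      show "x \<in> (*v) Ki ` orthogonal_comp ?U \<longleftrightarrow> x \<in> K_orth_comp K ?U"
      proof
        assume "x \<in> (*v) Ki ` orthogonal_comp ?U"
        then obtain s where "s \<in> orthogonal_comp ?U" "x = Ki *v s" by blast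
        then show "x \<in> K_orth_comp K ?U" using iff KiK(2) by simp
      next
        assume "x \<in> K_orth_comp K ?U"
        then have "K *v x \<in> orthogonal_comp ?U" using iff by blast
        moreover have "x = Ki *v (K *v x)" using KiK(1) by simp
        ultimately show "x \<in> (*v) Ki ` orthogonal_comp ?U" by blast
      qed
    qed
  qed
  have dimNT: "dim ?N + dim ?T = CARD('n) * CARD('d)"
  proof -
    have "dim {y \<in> UNIV. \<forall>x \<in> ?T. orthogonal x y} + dim ?T = dim (UNIV :: (real^('n\<times>'d)) set)"
      by (rule dim_subspace_orthogonal_to_vectors[OF subspace_rangeT subspace_UNIV subset_UNIV])
    moreover have "{y \<in> UNIV. \<forall>x \<in> ?T. orthogonal x y} = ?N"
      unfolding ker_eq_orth orthogonal_comp_def by simp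
    ultimately show ?thesis by (simp add: dim_UNIV)
  qed
  have dimT: "dim ?T = CARD('q)"
    using rankR rank_dim_range[of "transpose R"] rank_transpose[of R] by simp
  have qle: "CARD('q) \<le> CARD('n) * CARD('d)"
    using rank_bound[of R] rankR by simp
  have dimN: "dim ?N = CARD('n) * CARD('d) - CARD('q)" using dimNT dimT by simp
  have subN: "subspace ?N"
    unfolding ker_eq_orth by (rule subspace_orthogonal_comp)
  have dimU: "dim ?U = dim ?N"
  proof -
    have "?U = (*v) D ` ?N" unfolding Uspace_def by auto
    moreover have "inj_on ((*v) D) (span ?N)"
      unfolding span_eq_iff[THEN iffD2, OF subN]
    proof (rule inj_onI)
      fix x y assume "x \<in> ?N" "y \<in> ?N" "D *v x = D *v y"
      then have "x - y \<in> {\<zeta>. D *v \<zeta> = 0} \<inter> ?N"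
        by (simp add: matrix_vector_mult_diff_distrib)
      then have "x - y \<in> {0}" using ker by blast
      then show "x = y" by simp
    qed
    ultimately show ?thesis
      by (simp add: eucl.dim_image_eq matrix_vector_mul_linear)
  qed
  have subU: "subspace ?U"
  proof -
    have "?U = (*v) D ` ?N" unfolding Uspace_def by auto
    then show ?thesis using subN by (simp add: linear_subspace_image matrix_vector_mul_linear)
  qed
  have dimUP: "dim (orthogonal_comp ?U) + dim ?U = CARD('m)"
  proof -
    have "dim {y \<in> UNIV. \<forall>x \<in> ?U. orthogonal x y} + dim ?U = dim (UNIV :: (real^'m) set)"
      by (rule dim_subspace_orthogonal_to_vectors[OF subU subspace_UNIV subset_UNIV])
    moreover have "{y \<in> UNIV. \<forall>x \<in> ?U. orthogonal x y} = orthogonal_comp ?U"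
      unfolding orthogonal_comp_def by simp
    ultimately show ?thesis by (simp add: dim_UNIV)
  qed
  have dimV: "int (dim (Vspace D R K)) = int CARD('m) - int (CARD('n) * CARD('d)) + int CARD('q)"
    using dimUP dimU dimN qle V2 by linarith
  show ?thesis
    apply (intro conjI allI)
           apply (fact UP)
          apply (fact V1)
         apply (fact V2)
        apply (fact V3)
       apply (simp only: UP mem_Collect_eq)
      apply (fact dimU)
     apply (fact dimN)
    apply (fact dimV)
    done
qed

end
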